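(* Let $K$ be a field, $A=\{\alpha_1,\dots,\alpha_m\}\subset K$, $B=\{\beta_1,\dots,\beta_n\}\subset K$ finite sets with $|A|=m$, $|B|=n$, $f=\prod_{i}(x-\alpha_i)$, $g=\prod_j(x-\beta_j)$. Let $\max\{m,n\}\le d\le m+n-1$ and set $k:=m+n-d-1$. Then $$\operatorname{Syl}_{m,d-m}(A,B)=(-1)^{(d-m)n+m+n-1}F_k(f,g)\,f.$$
   Context: For finite sets $Y,Z$, $\mathcal{R}(Y,Z):=\prod_{y\in Y,z\in Z}(y-z)$ (equal to $1$ if $Y$ or $Z$ is empty), and $\mathcal{R}(x,Z):=\mathcal{R}(\{x\},Z)$. For $0\le p\le m$, $0\le q\le n$, $$\operatorname{Syl}_{p,q}(A,B)(x):=\sum_{\substack{A'\subset A,\ B'\subset B\\ |A'|=p,\ |B'|=q}}\mathcal{R}(A',B')\,\mathcal{R}(A\setminus A',B\setminus B')\,\frac{\mathcal{R}(x,A')\,\mathcal{R}(x,B')}{\mathcal{R}(A',A\setminus A')\,\mathcal{R}(B',B\setminus B')}.$$ Write $f=\sum_{i=0}^m f_ix^i$, $g=\sum_{i=0}^ng_ix^i$ with $f_i=g_i=0$ outside the natural ranges. For $0\le k\le\min\{m-1,n-1\}$, $F_k(f,g)(x)$ is the determinant of the $(m+n-2k)\times(m+n-2k)$ matrix with rows indexed by $(f,j)$, $j=n-k-1,\dots,0$, followed by $(g,j)$, $j=m-k-1,\dots,0$: the first $m+n-2k-1$ entries of row $(f,j)$ (resp. $(g,j)$) are the coefficients of $x^{m+n-k-1},\dots,x^{k+1}$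 in $x^jf$ (resp. $x^jg$), and the last entry is $x^j$ for row $(f,j)$ and $0$ for row $(g,j)$. (It is the coefficient of $f$ in the Bézout identity $\operatorname{Sres}_k(f,g)=F_k(f,g)f+G_k(f,g)g$.) *)

theory Defs
  imports "HOL-Computational_Algebra.Polynomial" "Jordan_Normal_Form.Determinant"
begin

definition Res :: "'a::comm_ring_1 set \<Rightarrow> 'a set \<Rightarrow> 'a" where
  "Res Y Z = (\<Prod>y\<in>Y. \<Prod>z\<in>Z. (y - z))"

definition Resx :: "'a::comm_ring_1 set \<Rightarrow> 'a poly" where
  "Resx Z = (\<Prod>z\<in>Z. [:- z, 1:])"

definition Syl :: "nat \<Rightarrow> nat \<Rightarrow> 'a::field set \<Rightarrow> 'a set \<Rightarrow> 'a poly" where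
  "Syl p q A B =
     (\<Sum>(A', B') \<in> {A'. A' \<subseteq> A \<and> card A' = p} \<times> {B'. B' \<subseteq> B \<and> card B' = q}.
        smult (Res A' B' * Res (A - A') (B - B') / (Res A' (A - A') * Res B' (B - B')))
              (Resx A' * Resx B'))"

definition shifted_coeff :: "'a::comm_ring_1 poly \<Rightarrow> nat \<Rightarrow> nat \<Rightarrow> 'a" where
  "shifted_coeff h j e = (if j \<le> e then coeff h (e - j) else 0)"

text \<open>The (m+n-2k) x (m+n-2k) matrix defining F_k(f,g); rows 0..n-k-1 are (f,j), j = n-k-1,...,0,
  rows n-k..m+n-2k-1 are (g,j), j = m-k-1,...,0; column c < m+n-2k-1 holds the coefficient of
  x^(m+n-k-1-c); the last column holds x^j for f-rows and 0 for g-rows.\<close>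
definition F_mat :: "nat \<Rightarrow> nat \<Rightarrow> nat \<Rightarrow> 'a::comm_ring_1 poly \<Rightarrow> 'a poly \<Rightarrow> 'a poly mat" where
  "F_mat k m n f g = mat (m + n - 2*k) (m + n - 2*k) (\<lambda>(i, c).
     if i < n - k then
       (let j = n - k - 1 - i in
        if c < m + n - 2*k - 1 then [: shifted_coeff f j (m + n - k - 1 - c) :] else monom 1 j)
     else
       (let j = m - k - 1 - (i - (n - k)) in
        if c < m + n - 2*k - 1 then [: shifted_coeff g j (m + n - k - 1 - c) :] else 0))"

definition F_k :: "nat \<Rightarrow> nat \<Rightarrow> nat \<Rightarrow> 'a::comm_ring_1 poly \<Rightarrow> 'a poly \<Rightarrow> 'a poly" where
  "F_k k m n f g = det (F_mat k m n f g)"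

end

theory Submission
  imports Defs
begin


fun vprod :: "'a::comm_ring_1 list \<Rightarrow> 'a" where
  "vprod [] = 1"
| "vprod (p # ps) = prod_list (map (\<lambda>q. p - q) ps) * vprod ps"

definition VdR :: "'a::comm_ring_1 list \<Rightarrow> 'a mat" where
  "VdR ps = mat (length ps) (length ps) (\<lambda>(i,j). ps ! i ^ (length ps - 1 - j))"

lemma prod_list_neg_swap:
  fixes p :: "'a::comm_ring_1"
  shows "prod_list (map (\<lambda>q. p - q) qs) = (-1) ^ length qs * prod_list (map (\<lambda>q. q - p) qs)"
proof (induction qs)
  case (Cons a qs)
  then show ?case by (simp add: algebra_simps)
qed simp

lemma prod_list_as_prod_nth: "prod_list (map f qs) = (\<Prod>i<length qs. f (qs ! i))"
  by (induction qs) (simp_all del: prod.lessThan_Suc add: prod.lessThan_Suc_shift)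

lemma det_VdR: "det (VdR ps) = vprod ps"
proof (induction ps)
  case Nil
  then show ?case by (simp add: VdR_def)
next
  case (Cons p qs)
  define n where "n = length qs"
  define N where "N = Suc n"
  define A where "A = VdR (p # qs)"
  define U :: "'a mat" where "U = mat N N (\<lambda>(i,j). if i = j then 1 else if i = Suc j then -p else 0)"
  have A: "A \<in> carrier_mat N N" by (simp add: A_def VdR_def N_def n_def)
  have U: "U \<in> carrier_mat N N" by (simp add: U_def)
  have dU: "diag_mat U = replicate N 1" by (rule nth_equalityI) (auto simp: U_def diag_mat_def)
  have detU: "det U = 1"
    by (subst det_lower_triangular[OF _ U]) (simp add: U_def, simp add: dU)
  define A' where "A' = A * U"
  have A'c: "A' \<in> carrier_mat N N" using A U by (simp add: A'_def)
  have detA': "det A' = det A" unfolding A'_def using det_mult[OF A U] detU by simp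
  have A'e: "A' $$ (i,j) = (if j < n then (p#qs)!i ^ (n - 1 - j) * ((p#qs)!i - p) else 1)"
    if "i < N" "j < N" for i j
  proof -
    have "A' $$ (i,j) = (\<Sum>l<N. A $$ (i,l) * U $$ (l,j))"
      using that A U by (simp add: A'_def scalar_prod_def atLeast0LessThan)
    also have "\<dots> = (\<Sum>l\<in>{j, Suc j} \<inter> {..<N}. A $$ (i,l) * U $$ (l,j))"
      by (rule sum.mono_neutral_right) (use that in \<open>auto simp: U_def\<close>)
    also have "\<dots> = (if j < n then (p#qs)!i ^ (n - 1 - j) * ((p#qs)!i - p) else 1)"
    proof (cases "j < n")
      case True
      then have "{j, Suc j} \<inter> {..<N} = {j, Suc j}" using N_def by auto
      moreover have "N - 1 - j = Suc (n - 1 - j)" using True N_def by auto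
      moreover have "N - 1 - Suc j = n - 1 - j" using True N_def by auto
      ultimately show ?thesis using True that
        by (simp add: A_def VdR_def U_def n_def N_def algebra_simps)
    next
      case False
      then have "j = n" using that N_def by auto
      then have "{j, Suc j} \<inter> {..<N} = {j}" using N_def by auto
      then show ?thesis using False that \<open>j = n\<close>
        by (simp add: A_def VdR_def U_def n_def N_def)
    qed
    finally show ?thesis .
  qed
  have row0: "A' $$ (0, j) = (if j = n then 1 else 0)" if "j < N" for j
    using A'e[of 0 j] that N_def by auto
  have "det A' = (\<Sum>j<N. A' $$ (0,j) * cofactor A' 0 j)"
    by (rule laplace_expansion_row[OF A'c]) (simp add: N_def)
  also have "\<dots> = (\<Sum>j\<in>{n}. A' $$ (0,j) * cofactor A' 0 j)"
    by (rule sum.mono_neutral_right) (auto simp: row0 N_def)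
  also have "\<dots> = (-1)^n * det (mat_delete A' 0 n)"
    by (simp add: row0 N_def cofactor_def)
  also have "mat_delete A' 0 n = mat\<^sub>r n n (\<lambda>i. (qs ! i - p) \<cdot>\<^sub>v row (VdR qs) i)"
    by (rule eq_matI) (use A'c in \<open>auto simp: mat_delete_def A'e N_def VdR_def n_def mult.commute\<close>)
  also have "det \<dots> = prod (\<lambda>i. qs ! i - p) {0..<n} * det (mat\<^sub>r n n (\<lambda>i. row (VdR qs) i))"
    by (rule det_rows_mul) (auto simp: VdR_def n_def)
  also have "mat\<^sub>r n n (\<lambda>i. row (VdR qs) i) = VdR qs"
    by (rule eq_matI) (auto simp: VdR_def n_def)
  finally have c1: "det A' = (-1)^n * (prod (\<lambda>i. qs ! i - p) {0..<n} * vprod qs)"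
    using Cons by simp
  have c2: "vprod (p#qs) = (-1)^n * (prod (\<lambda>i. qs!i - p) {0..<n} * vprod qs)"
    unfolding vprod.simps prod_list_neg_swap prod_list_as_prod_nth[of "\<lambda>q. q - p"]
    by (simp add: n_def atLeast0LessThan)
  have "det (VdR (p#qs)) = det A'" using detA' A_def by simp
  then show ?case using c1 c2 by simp
qed



lemma vprod_append: "vprod (xs @ ys) = vprod xs * vprod ys * prod_list (map (\<lambda>a. prod_list (map (\<lambda>c. a - c) ys)) xs)"
  by (induction xs) (simp_all add: mult_ac)

lemma signof_sq: "(signof p :: 'a::comm_ring_1) * signof p = 1"
  by (metis of_int_1 of_int_mult sign_idempotent)

lemma perm_of_list:
  assumes "distinct L" "set L = {0..<N}"
  shows "(\<lambda>i. if i < N then L ! i else i) permutes {0..<N}"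
proof -
  have len: "length L = N" using assms distinct_card by fastforce
  have "bij_betw ((!) L) {..<length L} (set L)" by (rule bij_betw_nth) (use assms in auto)
  then have "bij_betw (\<lambda>i. if i < N then L ! i else i) {0..<N} {0..<N}"
    using len assms by (auto intro: bij_betw_cong[THEN iffD1] simp: lessThan_atLeast0)
  then show ?thesis by (rule bij_imp_permutes) auto
qed

lemma det_MS:
  fixes ps :: "'b::idom list" and x :: 'b
  assumes n: "length ps = n" and S: "S \<subseteq> {0..<n}" and cS: "card S + 1 = r" and rn: "r \<le> n + 1"
  defines "MS \<equiv> mat (n+1) (n+1) (\<lambda>(l,i). if l < n then (if l \<in> S then (if i < r then ps!l ^ (r-1-i) else 0)
          else (if i < r then 0 else ps!l ^ (n-i))) else (if i < r then x ^ (r-1-i) else 0))"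
  shows "det MS * ((\<Prod>l\<in>S. \<Prod>l'\<in>{0..<n}-S. (ps!l - ps!l')) * (\<Prod>l'\<in>{0..<n}-S. (x - ps!l')))
         = vprod (ps @ [x])"
proof -
  define Sc where "Sc = {0..<n} - S"
  define sS where "sS = sorted_list_of_set S"
  define sC where "sC = sorted_list_of_set Sc"
  define L where "L = sS @ [n] @ sC"
  define \<tau> where "\<tau> = (\<lambda>i. if i < n+1 then L ! i else i)"
  define qs where "qs = ps @ [x]"
  have finS: "finite S" using S finite_subset by blast
  have lsS: "length sS = r - 1" using cS finS by (simp add: sS_def)
  have csc: "card Sc = n + 1 - r" using cS S finS by (simp add: Sc_def card_Diff_subset)
  have lsC: "length sC = n + 1 - r" using csc by (simp add: sC_def)
  have dL: "distinct L" using S finS by (auto simp: L_def sS_def sC_def Sc_def)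
  have sL: "set L = {0..<n+1}" using S finS by (auto simp: L_def sS_def sC_def Sc_def)
  have tau: "\<tau> permutes {0..<n+1}" unfolding \<tau>_def by (rule perm_of_list[OF dL sL])
  have MSc: "MS \<in> carrier_mat (n+1) (n+1)" by (simp add: MS_def)
  have V: "VdR qs \<in> carrier_mat (n+1) (n+1)" by (simp add: VdR_def qs_def n)
  define PSx where "PSx = map ((!) qs) (sS @ [n])"
  define PC where "PC = map ((!) qs) sC"
  have sSin: "sS ! i \<in> S" "sS ! i < n" if "i < r - 1" for i
  proof -
    have "sS ! i \<in> set sS" using that lsS by (intro nth_mem) simp
    then show "sS ! i \<in> S" "sS ! i < n" using finS S by (auto simp: sS_def)
  qed
  have sCin: "sC ! i \<in> Sc" "sC ! i \<notin> S" "sC ! i < n" if "i < n + 1 - r" for i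
  proof -
    have "sC ! i \<in> set sC" using that lsC by (intro nth_mem) simp
    then show "sC ! i \<in> Sc" "sC ! i \<notin> S" "sC ! i < n" using finS S by (auto simp: sC_def Sc_def)
  qed
  have P1: "mat (n+1) (n+1) (\<lambda>(i,j). MS $$ (\<tau> i, j)) =
      four_block_mat (VdR PSx) (0\<^sub>m r (n+1-r)) (0\<^sub>m (n+1-r) r) (VdR PC)"
  proof (rule eq_matI)
    fix i j assume ij: "i < dim_row (four_block_mat (VdR PSx) (0\<^sub>m r (n+1-r)) (0\<^sub>m (n+1-r) r) (VdR PC))"
       "j < dim_col (four_block_mat (VdR PSx) (0\<^sub>m r (n+1-r)) (0\<^sub>m (n+1-r) r) (VdR PC))"
    have lP: "length PSx = r" "length PC = n + 1 - r" using lsS lsC rn cS by (auto simp: PSx_def PC_def)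
    then have i: "i < n + 1" and j: "j < n + 1" using ij rn by (auto simp: VdR_def)
    show "mat (n+1) (n+1) (\<lambda>(i,j). MS $$ (\<tau> i, j)) $$ (i,j) =
      four_block_mat (VdR PSx) (0\<^sub>m r (n+1-r)) (0\<^sub>m (n+1-r) r) (VdR PC) $$ (i,j)"
    proof (cases "i < r - 1")
      case True
      then have ti: "\<tau> i = sS ! i" using lsS rn by (auto simp: \<tau>_def L_def nth_append)
      show ?thesis using True i j ti sSin[OF True] lP lsS
        by (auto simp: MS_def four_block_mat_def VdR_def PSx_def nth_append qs_def n)
    next
      case False
      show ?thesis
      proof (cases "i = r - 1")
        case True
        then have ti: "\<tau> i = n" using lsS rn by (auto simp: \<tau>_def L_def nth_append)
        show ?thesis using True i j ti lP lsS cS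
          by (auto simp: MS_def four_block_mat_def VdR_def PSx_def nth_append qs_def n)
      next
        case F2: False
        then have ir: "i \<ge> r" using False by auto
        have ti: "\<tau> i = sC ! (i - r)" using lsS rn ir i cS by (auto simp: \<tau>_def L_def nth_append)
        have ii: "i - r < n + 1 - r" using i ir by auto
        have e: "n + 1 - r - 1 - (j - r) = n - j" if "j \<ge> r" using that j by auto
        show ?thesis using ir i j ti sCin[OF ii] lP lsS e
          by (auto simp: MS_def four_block_mat_def VdR_def PC_def nth_append qs_def n)
      qed
    qed
  qed (use rn cS in \<open>auto simp: MS_def VdR_def PSx_def PC_def lsS lsC\<close>)
  have lP: "length PSx = r" "length PC = n + 1 - r" using lsS lsC rn cS by (auto simp: PSx_def PC_def)
  have "signof \<tau> * det MS = det (mat (n+1) (n+1) (\<lambda>(i,j). MS $$ (\<tau> i, j)))"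
    using det_permute_rows[OF MSc tau] by simp
  also have "\<dots> = det (VdR PSx) * det (VdR PC)"
    unfolding P1 by (rule det_four_block_mat_lower_left_zero) (auto simp: VdR_def lP)
  finally have e1: "signof \<tau> * det MS = vprod PSx * vprod PC" by (simp add: det_VdR)
  have P2: "mat (n+1) (n+1) (\<lambda>(i,j). VdR qs $$ (\<tau> i, j)) = VdR (map ((!) qs) L)"
  proof -
    have lL: "length L = n + 1" using dL sL distinct_card by fastforce
    have "\<tau> i < n + 1" if "i < n + 1" for i using that sL lL by (auto simp: \<tau>_def dest: nth_mem)
    then show ?thesis by (intro eq_matI) (auto simp: VdR_def lL qs_def n \<tau>_def)
  qed
  have "signof \<tau> * vprod qs = vprod (map ((!) qs) L)"
    using det_permute_rows[OF V tau] unfolding P2 det_VdR by simp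
  also have "map ((!) qs) L = PSx @ PC" by (simp add: L_def PSx_def PC_def)
  finally have e2: "signof \<tau> * vprod qs = vprod PSx * vprod PC * prod_list (map (\<lambda>a. prod_list (map (\<lambda>c. a - c) PC)) PSx)"
    by (simp add: vprod_append)
  define Pr where "Pr = prod_list (map (\<lambda>a. prod_list (map (\<lambda>c. a - c) PC)) PSx)"
  have "vprod qs = signof \<tau> * (signof \<tau> * vprod qs)" by (simp add: signof_sq mult.assoc[symmetric])
  also have "\<dots> = signof \<tau> * (signof \<tau> * det MS) * Pr" using e1 e2 by (simp add: Pr_def mult.assoc)
  also have "\<dots> = det MS * Pr" by (simp add: signof_sq mult.assoc[symmetric])
  finally have e3: "vprod qs = det MS * Pr" .
  have dsS: "distinct sS" "set sS = S" using finS by (auto simp: sS_def)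
  have dsC: "distinct sC" "set sC = Sc" using finS by (auto simp: sC_def Sc_def)
  have PSx': "PSx = map ((!) ps) sS @ [x]"
    using dsS S n by (auto simp: PSx_def qs_def nth_append intro!: map_cong)
  have PC': "PC = map ((!) ps) sC"
    using dsC S n by (auto simp: Sc_def PC_def qs_def nth_append intro!: map_cong)
  have inner: "prod_list (map (\<lambda>c. a - c) PC) = (\<Prod>l'\<in>Sc. a - ps!l')" for a
    unfolding PC' map_map o_def using prod.distinct_set_conv_list[OF dsC(1), of "\<lambda>l'. a - ps!l'"] dsC(2)
    by simp
  have "Pr = prod_list (map (\<lambda>a. (\<Prod>l'\<in>Sc. a - ps!l')) PSx)"
    unfolding Pr_def inner ..
  also have "\<dots> = (\<Prod>l\<in>S. \<Prod>l'\<in>Sc. ps!l - ps!l') * (\<Prod>l'\<in>Sc. x - ps!l')"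
    unfolding PSx' using prod.distinct_set_conv_list[OF dsS(1), of "\<lambda>l. (\<Prod>l'\<in>Sc. ps!l - ps!l')"] dsS(2)
    by (simp add: o_def)
  finally show ?thesis using e3 by (simp add: qs_def Sc_def)
qed



lemma mat_as_mat_r: "mat n n f = mat\<^sub>r n n (\<lambda>i. vec n (\<lambda>j. f (i,j)))"
  by (rule eq_matI) auto

lemma det_row_add_mat:
  assumes "k < n"
  shows "det (mat n n (\<lambda>(i,j). if i = k then a j + b j else c i j)) =
    det (mat n n (\<lambda>(i,j). if i = k then a j else c i j)) + det (mat n n (\<lambda>(i,j). if i = k then b j else c i j))"
proof -
  have e: "mat n n (\<lambda>(i,j). if i = k then g j else c i j) = mat\<^sub>r n n (\<lambda>i. if i = k then vec n g else vec n (c i))" for g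
    by (rule eq_matI) auto
  have e2: "mat n n (\<lambda>(i,j). if i = k then a j + b j else c i j) = mat\<^sub>r n n (\<lambda>i. if i = k then vec n a + vec n b else vec n (c i))"
    by (rule eq_matI) auto
  show ?thesis unfolding e2 e
    by (rule det_row_add) (use assms in auto)
qed

lemma det_split_rows:
  fixes u v :: "nat \<Rightarrow> nat \<Rightarrow> 'a::comm_ring_1"
  assumes "finite Z" "Z \<subseteq> {0..<n}"
  shows "det (mat n n (\<lambda>(i,j). if i \<in> Z then u i j + v i j else c i j)) =
    (\<Sum>S\<in>Pow Z. det (mat n n (\<lambda>(i,j). if i \<in> S then u i j else if i \<in> Z then v i j else c i j)))"
  using assms
proof (induction Z arbitrary: c rule: finite_induct)
  case empty
  then show ?case by simp
next
  case (insert z Z)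
  define c1 where "c1 = (\<lambda>i j. if i = z then u z j + v z j else c i j)"
  define D where "D = (\<lambda>S. det (mat n n (\<lambda>(i,j). if i \<in> S then u i j else if i \<in> insert z Z then v i j else c i j)))"
  have z: "z < n" using insert by auto
  have "mat n n (\<lambda>(i,j). if i \<in> insert z Z then u i j + v i j else c i j)
      = mat n n (\<lambda>(i,j). if i \<in> Z then u i j + v i j else c1 i j)"
    by (rule eq_matI) (auto simp: c1_def)
  then have "det (mat n n (\<lambda>(i,j). if i \<in> insert z Z then u i j + v i j else c i j))
      = (\<Sum>S\<in>Pow Z. det (mat n n (\<lambda>(i,j). if i \<in> S then u i j else if i \<in> Z then v i j else c1 i j)))"
    using insert by simp
  also have "\<dots> = (\<Sum>S\<in>Pow Z. D (insert z S) + D S)"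
  proof (rule sum.cong[OF refl])
    fix S assume S: "S \<in> Pow Z"
    have zS: "z \<notin> S" using S insert by auto
    define c2 where "c2 = (\<lambda>i j. if i \<in> S then u i j else if i \<in> Z then v i j else c i j)"
    have "mat n n (\<lambda>(i,j). if i \<in> S then u i j else if i \<in> Z then v i j else c1 i j)
       = mat n n (\<lambda>(i,j). if i = z then u z j + v z j else c2 i j)"
      by (rule eq_matI) (use zS insert in \<open>auto simp: c1_def c2_def\<close>)
    moreover have "mat n n (\<lambda>(i,j). if i = z then u z j else c2 i j) =
       mat n n (\<lambda>(i,j). if i \<in> insert z S then u i j else if i \<in> insert z Z then v i j else c i j)"
      by (rule eq_matI) (use zS insert in \<open>auto simp: c2_def\<close>)
    moreover have "mat n n (\<lambda>(i,j). if i = z then v z j else c2 i j) =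
       mat n n (\<lambda>(i,j). if i \<in> S then u i j else if i \<in> insert z Z then v i j else c i j)"
      by (rule eq_matI) (use zS insert in \<open>auto simp: c2_def\<close>)
    ultimately show "det (mat n n (\<lambda>(i,j). if i \<in> S then u i j else if i \<in> Z then v i j else c1 i j))
      = D (insert z S) + D S"
      unfolding D_def using det_row_add_mat[OF z, of "u z" "v z" c2] by simp
  qed
  also have "\<dots> = (\<Sum>S\<in>insert z ` Pow Z. D S) + (\<Sum>S\<in>Pow Z. D S)"
  proof -
    have "inj_on (insert z) (Pow Z)" by (rule inj_onI) (metis PowD insert.hyps(2) insert_ident subsetD)
    then show ?thesis by (simp add: sum.distrib sum.reindex)
  qed
  also have "\<dots> = (\<Sum>S\<in>Pow (insert z Z). D S)"
  proof -
    have "Pow Z \<inter> insert z ` Pow Z = {}" using insert(2) by auto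
    then show ?thesis using insert(1) by (simp add: Pow_insert sum.union_disjoint add.commute)
  qed
  finally show ?case unfolding D_def .
qed

lemma det_rows_scale:
  fixes f :: "nat \<Rightarrow> nat \<Rightarrow> 'a::comm_ring_1"
  shows "det (mat n n (\<lambda>(i,j). d i * f i j)) = (\<Prod>i<n. d i) * det (mat n n (\<lambda>(i,j). f i j))"
proof -
  have "mat n n (\<lambda>(i,j). d i * f i j) = mat\<^sub>r n n (\<lambda>i. d i \<cdot>\<^sub>v vec n (\<lambda>j. f i j))"
    by (rule eq_matI) auto
  moreover have "mat n n (\<lambda>(i,j). f i j) = mat\<^sub>r n n (\<lambda>i. vec n (\<lambda>j. f i j))"
    by (rule eq_matI) auto
  ultimately show ?thesis using det_rows_mul[of "\<lambda>i. vec n (\<lambda>j. f i j)" n d]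
    by (simp add: atLeast0LessThan)
qed

definition MSm :: "nat \<Rightarrow> nat \<Rightarrow> nat set \<Rightarrow> 'b::comm_ring_1 list \<Rightarrow> 'b \<Rightarrow> 'b mat" where
  "MSm n r S ps x = mat (n+1) (n+1) (\<lambda>(l,i). if l < n then (if l \<in> S then (if i < r then ps!l ^ (r-1-i) else 0)
          else (if i < r then 0 else ps!l ^ (n-i))) else (if i < r then x ^ (r-1-i) else 0))"

lemma det_MS_zero:
  assumes S: "S \<subseteq> {0..<n}" and cS: "card S + 1 \<noteq> r" and rn: "r \<le> n + 1"
  shows "det (MSm n r S ps x) = 0"
proof -
  have finS: "finite S" using S finite_subset by blast
  have "det (MSm n r S ps x) = (\<Sum>p\<in>{p. p permutes {0..<n+1}}. signof p * (\<Prod>i=0..<n+1. MSm n r S ps x $$ (i, p i)))"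
    by (rule det_def') (simp add: MSm_def)
  also have "\<dots> = 0"
  proof (rule sum.neutral, rule ballI)
    fix p assume "p \<in> {p. p permutes {0..<n+1}}"
    then have p: "p permutes {0..<n+1}" by simp
    have inj: "inj_on p X" for X using permutes_inj_on[OF p] by (simp add: inj_on_subset)
    have pr: "p i < n + 1" if "i < n + 1" for i using permutes_in_image[OF p] that by auto
    have "\<exists>i<n+1. MSm n r S ps x $$ (i, p i) = 0"
    proof (cases "card S + 1 > r")
      case True
      define I where "I = insert n S"
      have cI: "card I = card S + 1" using finS S by (subst I_def, subst card_insert_disjoint) auto
      have "\<not> p ` I \<subseteq> {0..<r}"
      proof
        assume "p ` I \<subseteq> {0..<r}"
        then have "card (p ` I) \<le> r" using card_mono[of "{0..<r}"] by fastforce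
        moreover have "card (p ` I) = card I" by (rule card_image[OF inj])
        ultimately show False using cI True by simp
      qed
      then obtain i where i: "i \<in> I" "\<not> p i < r" by (auto simp: image_subset_iff)
      then have "i < n + 1" using S by (auto simp: I_def)
      then show ?thesis using i pr[of i] by (intro exI[of _ i]) (auto simp: MSm_def I_def)
    next
      case False
      then have lt: "card S + 1 < r" using cS by simp
      define J where "J = {0..<n} - S"
      have cJ: "card J = n - card S" using finS S by (simp add: J_def card_Diff_subset)
      have "\<not> p ` J \<subseteq> {r..<n+1}"
      proof
        assume "p ` J \<subseteq> {r..<n+1}"
        then have "card (p ` J) \<le> n + 1 - r" using card_mono[of "{r..<n+1}"] by fastforce
        moreover have "card (p ` J) = card J" by (rule card_image[OF inj])
        moreover have "card S \<le> n" using card_mono[OF _ S] by simp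
        ultimately show False using cJ lt rn by arith
      qed
      then obtain i where i: "i \<in> J" "\<not> (r \<le> p i \<and> p i < n + 1)" by (auto simp: image_subset_iff)
      then have "i < n" "i \<notin> S" by (auto simp: J_def)
      moreover have "p i < r" using i pr[of i] \<open>i < n\<close> by auto
      ultimately show ?thesis using pr[of i] by (intro exI[of _ i]) (auto simp: MSm_def)
    qed
    then have "(\<Prod>i=0..<n+1. MSm n r S ps x $$ (i, p i)) = 0"
      by (intro prod_zero) auto
    then show "signof p * (\<Prod>i=0..<n+1. MSm n r S ps x $$ (i, p i)) = 0"
      by (simp only: mult_zero_right)
  qed
  finally show ?thesis .
qed



lemma det_MS2:
  fixes ps :: "'b::idom list" and x :: 'b
  assumes n: "length ps = n" and S: "S \<subseteq> {0..<n}" and cS: "card S + 1 = r" and rn: "r \<le> n + 1"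
    and xne: "\<And>l. l < n \<Longrightarrow> x \<noteq> ps ! l"
  shows "det (MSm n r S ps x) * (\<Prod>l\<in>S. \<Prod>l'\<in>{0..<n}-S. (ps!l - ps!l'))
         = (-1)^n * vprod ps * (\<Prod>l\<in>S. x - ps!l)"
proof -
  define Sc where "Sc = {0..<n} - S"
  define Q where "Q = (\<Prod>l'\<in>Sc. (x - ps!l'))"
  have finS: "finite S" using S finite_subset by blast
  have Q0: "Q \<noteq> 0" using xne by (auto simp: Q_def Sc_def)
  define R where "R = (\<Prod>l\<in>S. \<Prod>l'\<in>Sc. (ps!l - ps!l'))"
  define P where "P = (\<Prod>l\<in>S. x - ps!l)"
  have e1: "det (MSm n r S ps x) * (R * Q) = vprod (ps @ [x])"
    using det_MS[OF n S cS rn, of x] by (simp add: MSm_def Q_def Sc_def R_def)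
  have e2: "vprod (ps @ [x]) = vprod ps * prod_list (map (\<lambda>a. a - x) ps)"
    by (simp add: vprod_append)
  have e3: "prod_list (map (\<lambda>a. a - x) ps) = (\<Prod>l<n. ps!l - x)"
    by (simp add: prod_list_as_prod_nth n)
  have e4: "(\<Prod>l<n. ps!l - x) = (\<Prod>l\<in>S. ps!l - x) * (\<Prod>l\<in>Sc. ps!l - x)"
  proof -
    have u: "{..<n} = S \<union> Sc" using S by (auto simp: Sc_def)
    have "(\<Prod>l\<in>S \<union> Sc. ps!l - x) = (\<Prod>l\<in>S. ps!l - x) * (\<Prod>l\<in>Sc. ps!l - x)"
      by (rule prod.union_disjoint) (auto simp: Sc_def finS)
    then show ?thesis by (simp only: u)
  qed
  have e5: "(\<Prod>l\<in>Sc. ps!l - x) = (-1)^card Sc * Q"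
    unfolding Q_def using prod_uminus[of "\<lambda>l. x - ps!l" Sc] by simp
  have e6: "(\<Prod>l\<in>S. ps!l - x) = (-1)^card S * P"
    unfolding P_def using prod_uminus[of "\<lambda>l. x - ps!l" S] by simp
  have "card S \<le> n" using card_mono[OF _ S] by simp
  then have cn: "card S + card Sc = n" using S finS by (simp add: Sc_def card_Diff_subset card_mono)
  have "det (MSm n r S ps x) * R * Q = ((-1)^n * vprod ps * P) * Q"
    using e1 e2 e3 e4 e5 e6 cn[symmetric] by (simp add: power_add mult_ac)
  then have "det (MSm n r S ps x) * R = (-1)^n * vprod ps * P"
    using Q0 mult_right_cancel by blast
  then show ?thesis by (simp add: R_def Sc_def P_def)
qed

lemma det_ET:
  fixes ps :: "'b::idom list" and w :: "nat \<Rightarrow> 'b"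
  assumes n: "length ps = n" and rn: "r \<le> n + 1"
  shows "det (mat (n+1) (n+1) (\<lambda>(l,i). if l < n then (if i < r then w l * ps!l^(r-1-i) else ps!l^(n-i))
            else (if i < r then x^(r-1-i) else 0)))
   = (\<Sum>S \<in> {S. S \<subseteq> {0..<n} \<and> card S + 1 = r}. (\<Prod>l\<in>S. w l) * det (MSm n r S ps x))"
proof -
  define u where "u = (\<lambda>l i. if i < r then w l * ps!l^(r-1-i) else (0::'b))"
  define v where "v = (\<lambda>l i. if i < r then 0 else ps!l^(n-i))"
  define c where "c = (\<lambda>(l::nat) i. if i < r then x^(r-1-i) else 0)"
  define Z where "Z = {0..<n}"
  have "mat (n+1) (n+1) (\<lambda>(l,i). if l < n then (if i < r then w l * ps!l^(r-1-i) else ps!l^(n-i))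
            else (if i < r then x^(r-1-i) else 0)) =
        mat (n+1) (n+1) (\<lambda>(l,i). if l \<in> Z then u l i + v l i else c l i)"
    by (rule eq_matI) (auto simp: u_def v_def c_def Z_def)
  also have "det \<dots> = (\<Sum>S\<in>Pow Z. det (mat (n+1) (n+1) (\<lambda>(l,i). if l \<in> S then u l i else if l \<in> Z then v l i else c l i)))"
    by (rule det_split_rows) (auto simp: Z_def)
  also have "\<dots> = (\<Sum>S\<in>Pow Z. (\<Prod>l\<in>S. w l) * det (MSm n r S ps x))"
  proof (rule sum.cong[OF refl])
    fix S assume S: "S \<in> Pow Z"
    define d where "d = (\<lambda>l. if l \<in> S then w l else 1)"
    have "mat (n+1) (n+1) (\<lambda>(l,i). if l \<in> S then u l i else if l \<in> Z then v l i else c l i)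
        = mat (n+1) (n+1) (\<lambda>(l,i). d l * (MSm n r S ps x $$ (l,i)))"
      by (rule eq_matI) (use S in \<open>auto simp: u_def v_def c_def Z_def d_def MSm_def\<close>)
    also have "det \<dots> = (\<Prod>l<n+1. d l) * det (mat (n+1) (n+1) (\<lambda>(l,i). MSm n r S ps x $$ (l,i)))"
      by (rule det_rows_scale)
    also have "mat (n+1) (n+1) (\<lambda>(l,i). MSm n r S ps x $$ (l,i)) = MSm n r S ps x"
      by (rule eq_matI) (auto simp: MSm_def)
    also have "(\<Prod>l<n+1. d l) = (\<Prod>l\<in>S. w l)"
    proof -
      have "(\<Prod>l<n+1. d l) = (\<Prod>l\<in>{..<n+1} \<inter> {l. l \<in> S}. w l) * (\<Prod>l\<in>{..<n+1} \<inter> - {l. l \<in> S}. 1)"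
        unfolding d_def by (rule prod.If_cases) simp
      also have "{..<n+1} \<inter> {l. l \<in> S} = S" using S by (auto simp: Z_def)
      finally show ?thesis by simp
    qed
    finally show "det (mat (n+1) (n+1) (\<lambda>(l,i). if l \<in> S then u l i else if l \<in> Z then v l i else c l i))
        = (\<Prod>l\<in>S. w l) * det (MSm n r S ps x)" .
  qed
  also have "\<dots> = (\<Sum>S \<in> {S. S \<subseteq> {0..<n} \<and> card S + 1 = r}. (\<Prod>l\<in>S. w l) * det (MSm n r S ps x))"
    by (rule sum.mono_neutral_right) (auto simp: Z_def det_MS_zero[OF _ _ rn])
  finally show ?thesis .
qed



lemma vprod_nonzero: "distinct (ps :: 'b::idom list) \<Longrightarrow> vprod ps \<noteq> 0"
  by (induction ps) (auto simp: prod_list_zero_iff)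

lemma poly_sum_lessThan:
  fixes p :: "'a::comm_ring_1 poly"
  assumes "degree p < n"
  shows "poly p b = (\<Sum>e<n. coeff p e * b ^ e)"
proof -
  have "poly p b = (\<Sum>e\<le>degree p. coeff p e * b ^ e)" by (rule poly_altdef)
  also have "\<dots> = (\<Sum>e<n. coeff p e * b ^ e)"
    by (rule sum.mono_neutral_left) (use assms in \<open>auto simp: coeff_eq_0\<close>)
  finally show ?thesis .
qed

lemma const_poly_sum: "(\<Sum>x\<in>A. [:f x:]) = [:\<Sum>x\<in>A. f x:]"
  by (induction A rule: infinite_finite_induct) auto

definition Hmat :: "nat \<Rightarrow> nat \<Rightarrow> 'a::field poly \<Rightarrow> 'a poly \<Rightarrow> 'a poly mat" where
  "Hmat r n f g = mat r r (\<lambda>(i,c). if c < r - 1 then [:coeff (monom 1 (r-1-i) * f mod g) (n-1-c):] else monom 1 (r-1-i))"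

lemma stepC:
  fixes f g :: "'a::field poly" and bs :: "'a list"
  assumes n: "length bs = n" and roots: "\<And>l. l < n \<Longrightarrow> poly g (bs!l) = 0"
    and dg: "degree g = n" and g0: "g \<noteq> 0" and kr: "k + r = n" and r1: "1 \<le> r"
  shows "(-1)^(k+1) * det (Hmat r n f g) * vprod (map (\<lambda>b. [:b:]) bs) =
    det (mat (n+1) (n+1) (\<lambda>(l,i). if l < n then (if i < r then [:poly f (bs!l):] * [:bs!l:]^(r-1-i) else [:bs!l:]^(n-i))
            else (if i < r then monom 1 1^(r-1-i) else 0)))"
proof -
  define p where "p = (\<lambda>i. monom 1 (r-1-i) * f mod g)"
  have dp: "degree (p i) < n" for i
    using degree_mod_less[OF g0, of "monom 1 (r-1-i) * f"] dg n kr r1 by (auto simp: p_def)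
  define Full :: "'a poly mat" where "Full = mat (n+1) (n+1) (\<lambda>(i,c). if i < r then (if c < n then [:coeff (p i) (n-1-c):] else monom 1 (r-1-i))
      else (if c < n then (if c = i - 1 then 1 else 0) else 0))"
  define T :: "'a poly mat" where "T = mat (n+1) (n+1) (\<lambda>(c,l). if c < n \<and> l < n then [:bs!l ^ (n-1-c):] else if c = n \<and> l = n then 1 else 0)"
  define ET :: "'a poly mat" where "ET = mat (n+1) (n+1) (\<lambda>(l,i). if l < n then (if i < r then [:poly f (bs!l):] * [:bs!l:]^(r-1-i) else [:bs!l:]^(n-i))
            else (if i < r then monom 1 1^(r-1-i) else 0))"
  have Fc: "Full \<in> carrier_mat (n+1) (n+1)" and Tc: "T \<in> carrier_mat (n+1) (n+1)" and ETc: "ET \<in> carrier_mat (n+1) (n+1)"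
    by (auto simp: Full_def T_def ET_def)
  have prod: "Full * T = transpose_mat ET"
  proof (rule eq_matI)
    fix i l assume "i < dim_row (transpose_mat ET)" "l < dim_col (transpose_mat ET)"
    then have i: "i < n + 1" and l: "l < n + 1" by (auto simp: ET_def)
    have "(Full * T) $$ (i,l) = (\<Sum>c<n+1. Full $$ (i,c) * T $$ (c,l))"
      using i l Fc Tc by (simp add: scalar_prod_def atLeast0LessThan)
    also have "\<dots> = (\<Sum>c<n. Full $$ (i,c) * T $$ (c,l)) + Full $$ (i,n) * T $$ (n,l)"
      by simp
    also have "\<dots> = ET $$ (l,i)"
    proof (cases "l < n")
      case lt: True
      show ?thesis
      proof (cases "i < r")
        case True
        have "(\<Sum>c<n. Full $$ (i,c) * T $$ (c,l)) = (\<Sum>c<n. [:coeff (p i) (n - Suc c) * bs!l ^ (n - Suc c):])"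
          by (rule sum.cong) (use True lt i in \<open>auto simp: Full_def T_def\<close>)
        also have "\<dots> = [:\<Sum>c<n. coeff (p i) (n - Suc c) * bs!l ^ (n - Suc c):]"
          by (simp add: const_poly_sum)
        also have "(\<Sum>c<n. coeff (p i) (n - Suc c) * bs!l ^ (n - Suc c)) = (\<Sum>e<n. coeff (p i) e * bs!l ^ e)"
          by (rule sum.nat_diff_reindex)
        also have "\<dots> = poly (p i) (bs!l)" by (rule poly_sum_lessThan[symmetric, OF dp])
        also have "\<dots> = bs!l ^ (r-1-i) * poly f (bs!l)"
          using roots[OF lt] by (simp add: p_def poly_mod poly_monom)
        finally show ?thesis using True lt i
          by (simp add: Full_def T_def ET_def poly_const_pow mult.commute)
      next
        case False
        have "(\<Sum>c<n. Full $$ (i,c) * T $$ (c,l)) = (\<Sum>c\<in>{i-1}. Full $$ (i,c) * T $$ (c,l))"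
          by (rule sum.mono_neutral_right) (use False i r1 in \<open>auto simp: Full_def\<close>)
        then show ?thesis using False lt i r1 kr
          by (simp add: Full_def T_def ET_def poly_const_pow Suc_diff_le)
      qed
    next
      case False
      then have ln: "l = n" using l by simp
      have "(\<Sum>c<n. Full $$ (i,c) * T $$ (c,l)) = 0"
        by (rule sum.neutral) (use ln in \<open>auto simp: T_def\<close>)
      then show ?thesis using ln i by (simp add: Full_def T_def ET_def monom_power)
    qed
    finally show "(Full * T) $$ (i,l) = transpose_mat ET $$ (i,l)" using i l by (simp add: ET_def)
  qed (auto simp: Full_def T_def ET_def)
  have detT: "det T = vprod (map (\<lambda>b. [:b:]) bs)"
  proof -
    have "T = four_block_mat (transpose_mat (VdR (map (\<lambda>b. [:b:]) bs))) (0\<^sub>m n 1) (0\<^sub>m 1 n) (1\<^sub>m 1)"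
      by (rule eq_matI) (auto simp: T_def VdR_def four_block_mat_def n poly_const_pow)
    also have "det \<dots> = det (transpose_mat (VdR (map (\<lambda>b. [:b:]) bs))) * det (1\<^sub>m 1 :: 'a poly mat)"
      by (rule det_four_block_mat_lower_left_zero) (auto simp: VdR_def n)
    finally show ?thesis
      by (simp add: det_transpose[of _ n] VdR_def n det_VdR[symmetric])
  qed
  have detFull: "det Full = (-1)^(k+1) * det (Hmat r n f g)"
  proof -
    have "det Full = (-1)^((k+1)*1) * det (mat (n+1) (n+1) (\<lambda>(i,j). Full $$ (i, if j < r-1 then j else if j < r-1 + 1 then j + (k+1) else j - 1)))"
      by (rule det_swap_final_cols[OF Fc]) (use kr r1 in auto)
    also have "mat (n+1) (n+1) (\<lambda>(i,j). Full $$ (i, if j < r-1 then j else if j < r-1 + 1 then j + (k+1) else j - 1))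
      = four_block_mat (Hmat r n f g) (mat r (k+1) (\<lambda>(i,c). [:coeff (p i) (k - c):])) (0\<^sub>m (k+1) r) (1\<^sub>m (k+1))"
      by (rule eq_matI) (use kr r1 in \<open>auto simp: Full_def Hmat_def four_block_mat_def p_def\<close>)
    also have "det \<dots> = det (Hmat r n f g) * det (1\<^sub>m (k+1) :: 'a poly mat)"
      by (rule det_four_block_mat_lower_left_zero) (auto simp: Hmat_def)
    finally show ?thesis by simp
  qed
  have "det ET = det (transpose_mat ET)" using det_transpose[OF ETc] by simp
  also have "\<dots> = det Full * det T" unfolding prod[symmetric] by (rule det_mult[OF Fc Tc])
  finally show ?thesis using detFull detT by (simp add: ET_def)
qed



lemma degree_div_le:
  fixes a b :: "'a::field poly"
  assumes "b \<noteq> 0"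
  shows "degree (a div b) + degree b \<le> degree a \<or> a div b = 0"
proof (cases "a div b = 0")
  case False
  have a: "a = (a div b) * b + a mod b" by simp
  have dm: "degree ((a div b) * b) = degree (a div b) + degree b"
    using False assms by (simp add: degree_mult_eq)
  have "a mod b = 0 \<or> degree (a mod b) < degree b" by (rule degree_mod_less[OF assms])
  then have "degree (a mod b) < degree ((a div b) * b) \<or> a mod b = 0" using dm by auto
  then have "degree a = degree ((a div b) * b)"
    by (metis a add.right_neutral degree_add_eq_left)
  then show ?thesis using dm by simp
qed simp

lemma coeff_mult_trunc:
  fixes q g :: "'a::comm_ring_1 poly"
  assumes "degree q < s \<or> q = 0"
  shows "coeff (q * g) e = (\<Sum>t<s. coeff q t * shifted_coeff g t e)"
proof -
  have "coeff (q * g) e = (\<Sum>t\<le>e. coeff q t * coeff g (e - t))" by (rule coeff_mult)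
  also have "\<dots> = (\<Sum>t\<in>{..e} \<union> {..<s}. coeff q t * shifted_coeff g t e)"
    by (rule sum.mono_neutral_cong_left) (use assms in \<open>auto simp: shifted_coeff_def coeff_eq_0\<close>)
  also have "\<dots> = (\<Sum>t<s. coeff q t * shifted_coeff g t e)"
    by (rule sum.mono_neutral_cong_right) (use assms in \<open>auto simp: shifted_coeff_def coeff_eq_0\<close>)
  finally show ?thesis .
qed

lemma shifted_coeff_monom: "shifted_coeff h j e = coeff (monom 1 j * h) e"
  by (simp add: shifted_coeff_def coeff_monom_mult)

lemma stepB:
  fixes f g :: "'a::field poly"
  assumes r1: "1 \<le> r" and s1: "1 \<le> s" and dg: "degree g = r + k" and mg: "coeff g (r + k) = 1"
    and df: "degree f \<le> s + k"
  shows "det (F_mat k (s+k) (r+k) f g) = (-1)^(r*s) * det (Hmat r (r+k) f g)"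
proof -
  define N where "N = r + s"
  define F where "F = F_mat k (s+k) (r+k) f g"
  have Fc: "F \<in> carrier_mat N N" by (simp add: F_def F_mat_def N_def add.commute)
  have Fe: "F $$ (i,c) = (if i < r then (if c < N-1 then [:shifted_coeff f (r-1-i) (s+r+k-1-c):] else monom 1 (r-1-i))
      else (if c < N-1 then [:shifted_coeff g (s-1-(i-r)) (s+r+k-1-c):] else 0))" if "i < N" "c < N" for i c
    using that by (simp add: F_def F_mat_def N_def Let_def algebra_simps)
  define q where "q = (\<lambda>i. (monom 1 (r-1-i) * f) div g)"
  have g0: "g \<noteq> 0" using mg by auto
  have dq: "degree (q i) < s \<or> q i = 0" for i
  proof -
    have "degree (monom 1 (r-1-i) * f) \<le> (r - 1 - i) + degree f"
      by (metis degree_monom_le degree_mult_le add_le_mono order_trans le_refl)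
    then show ?thesis using degree_div_le[OF g0, of "monom 1 (r-1-i) * f"] dg df r1
      unfolding q_def by linarith
  qed
  define L :: "'a poly mat" where "L = mat N N (\<lambda>(i,l). if i = l then 1 else if i < r \<and> r \<le> l then - [:coeff (q i) (s-1-(l-r)):] else 0)"
  have Lc: "L \<in> carrier_mat N N" by (simp add: L_def)
  have dL: "diag_mat L = replicate N 1" by (rule nth_equalityI) (auto simp: L_def diag_mat_def)
  have uL: "upper_triangular L" unfolding upper_triangular_def by (auto simp: L_def)
  have detL: "det L = 1"
    by (subst det_upper_triangular[OF uL Lc]) (simp add: dL)
  define M2 where "M2 = L * F"
  have M2c: "M2 \<in> carrier_mat N N" using Lc Fc by (simp add: M2_def)
  have detM2: "det M2 = det F" using det_mult[OF Lc Fc] detL by (simp add: M2_def)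
  have M2e: "M2 $$ (i,c) = (if i < r then (if c < N-1 then [:coeff (monom 1 (r-1-i) * f mod g) (s+r+k-1-c):] else monom 1 (r-1-i))
      else F $$ (i,c))" if i: "i < N" and c: "c < N" for i c
  proof -
    have "M2 $$ (i,c) = (\<Sum>l<N. L $$ (i,l) * F $$ (l,c))"
      using i c Lc Fc by (simp add: M2_def scalar_prod_def atLeast0LessThan)
    also have "\<dots> = (if i < r then (if c < N-1 then [:coeff (monom 1 (r-1-i) * f mod g) (s+r+k-1-c):] else monom 1 (r-1-i))
      else F $$ (i,c))"
    proof (cases "i < r")
      case False
      have "(\<Sum>l<N. L $$ (i,l) * F $$ (l,c)) = (\<Sum>l\<in>{i}. L $$ (i,l) * F $$ (l,c))"
        by (rule sum.mono_neutral_right) (use i False in \<open>auto simp: L_def\<close>)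
      then show ?thesis using False i by (simp add: L_def)
    next
      case True
      have "(\<Sum>l<N. L $$ (i,l) * F $$ (l,c)) = (\<Sum>l\<in>{i} \<union> {r..<N}. L $$ (i,l) * F $$ (l,c))"
        by (rule sum.mono_neutral_right) (use i True in \<open>auto simp: L_def\<close>)
      also have "\<dots> = F $$ (i,c) + (\<Sum>l\<in>{r..<N}. L $$ (i,l) * F $$ (l,c))"
        using True i by (subst sum.union_disjoint) (auto simp: L_def)
      also have "(\<Sum>l\<in>{r..<N}. L $$ (i,l) * F $$ (l,c)) =
          (\<Sum>l\<in>{r..<N}. - [:coeff (q i) (s-1-(l-r)) * (if c < N - 1 then shifted_coeff g (s-1-(l-r)) (s+r+k-1-c) else 0):])"
        by (rule sum.cong[OF refl]) (use True i c in \<open>auto simp: L_def Fe\<close>)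
      also have "\<dots> = - [:\<Sum>l\<in>{r..<N}. coeff (q i) (s-1-(l-r)) * (if c < N - 1 then shifted_coeff g (s-1-(l-r)) (s+r+k-1-c) else 0):]"
        by (simp add: sum_negf const_poly_sum)
      also have "(\<Sum>l\<in>{r..<N}. coeff (q i) (s-1-(l-r)) * (if c < N - 1 then shifted_coeff g (s-1-(l-r)) (s+r+k-1-c) else 0))
          = (\<Sum>t<s. coeff (q i) t * (if c < N - 1 then shifted_coeff g t (s+r+k-1-c) else 0))"
      proof -
        define h where "h = (\<lambda>t. coeff (q i) t * (if c < N - 1 then shifted_coeff g t (s+r+k-1-c) else 0))"
        have "(\<Sum>l\<in>{r..<N}. h (s-1-(l-r))) = (\<Sum>u\<in>{0..<s}. h (s-1-u))"
          using sum.atLeastLessThan_shift_bounds[of "\<lambda>l. h (s-1-(l-r))" 0 r s] by (simp add: N_def o_def add.commute)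
        also have "\<dots> = (\<Sum>t<s. h t)"
          using sum.nat_diff_reindex[of h s] by (simp add: atLeast0LessThan)
        finally show ?thesis by (simp only: h_def)
      qed
      finally have eq: "(\<Sum>l<N. L $$ (i,l) * F $$ (l,c)) = F $$ (i,c) -
          [:\<Sum>t<s. coeff (q i) t * (if c < N - 1 then shifted_coeff g t (s+r+k-1-c) else 0):]" by simp
      show ?thesis
      proof (cases "c < N - 1")
        case cT: True
        have "(\<Sum>t<s. coeff (q i) t * shifted_coeff g t (s+r+k-1-c)) = coeff (q i * g) (s+r+k-1-c)"
          by (rule coeff_mult_trunc[symmetric, OF dq])
        moreover have "monom 1 (r-1-i) * f mod g = monom 1 (r-1-i) * f - q i * g"
          by (simp add: q_def minus_div_mult_eq_mod)
        ultimately show ?thesis using eq True cT i c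
          by (simp add: Fe shifted_coeff_monom)
      next
        case False
        then show ?thesis using eq True i c by (simp add: Fe)
      qed
    qed
    finally show ?thesis .
  qed
  have M2c': "M2 \<in> carrier_mat (s + r) (s + r)" using M2c by (simp add: N_def add.commute)
  define G where "G = mat s s (\<lambda>(i,c). F $$ (i + r, c))"
  define Y where "Y = mat s r (\<lambda>(i,c). F $$ (i + r, c + s))"
  have sw: "mat (s + r) (s + r) (\<lambda>(i,j). M2 $$ (if i < s then i + r else i - s, j))
     = four_block_mat G Y (0\<^sub>m r s) (Hmat r (r+k) f g)"
  proof (rule eq_matI)
    fix i j assume "i < dim_row (four_block_mat G Y (0\<^sub>m r s) (Hmat r (r+k) f g))"
      "j < dim_col (four_block_mat G Y (0\<^sub>m r s) (Hmat r (r+k) f g))"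
    then have i: "i < s + r" and j: "j < s + r" by (auto simp: G_def Hmat_def)
    show "mat (s + r) (s + r) (\<lambda>(i,j). M2 $$ (if i < s then i + r else i - s, j)) $$ (i,j) =
      four_block_mat G Y (0\<^sub>m r s) (Hmat r (r+k) f g) $$ (i,j)"
    proof (cases "i < s")
      case True
      then show ?thesis using i j by (auto simp: four_block_mat_def G_def Y_def Hmat_def M2e N_def)
    next
      case False
      define i' where "i' = i - s"
      have i': "i' < r" "i = i' + s" using False i by (auto simp: i'_def)
      define p where "p = monom 1 (r - 1 - i') * f mod g"
      have dp: "degree p < r + k" using degree_mod_less[OF g0, of "monom 1 (r-1-i') * f"] dg r1
        by (auto simp: p_def)
      show ?thesis
      proof (cases "j < s")
        case True
        have "coeff p (s + r + k - 1 - j) = 0" by (rule coeff_eq_0) (use dp True in auto)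
        then show ?thesis using True i' j s1 r1
          by (auto simp: four_block_mat_def G_def Y_def Hmat_def M2e N_def p_def)
      next
        case jF: False
        have e: "s + r + k - 1 - j = r + k - 1 - (j - s)" using jF j by auto
        show ?thesis using jF i' j s1 r1 e
          by (auto simp: four_block_mat_def G_def Y_def Hmat_def M2e N_def p_def)
      qed
    qed
  qed (auto simp: G_def Hmat_def)
  have uG: "upper_triangular G"
    unfolding upper_triangular_def
  proof (intro allI impI)
    fix i c assume i: "i < dim_row G" and c: "c < i"
    then have "i < s" by (simp add: G_def)
    have "coeff g (s + r + k - 1 - c - (s - 1 - i)) = 0"
      by (rule coeff_eq_0) (use c \<open>i < s\<close> dg in auto)
    then show "G $$ (i,c) = 0" using i c \<open>i < s\<close> r1
      by (auto simp: G_def Fe N_def shifted_coeff_def)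
  qed
  have dG: "diag_mat G = replicate s 1"
  proof (rule nth_equalityI)
    fix i assume "i < length (diag_mat G)"
    then have i: "i < s" by (simp add: G_def diag_mat_def)
    have "s + r + k - 1 - i - (s - 1 - i) = r + k" using i r1 by auto
    then show "diag_mat G ! i = replicate s 1 ! i" using i r1 mg
      by (auto simp: G_def diag_mat_def Fe N_def shifted_coeff_def)
  qed (simp add: G_def diag_mat_def)
  have detG: "det G = 1"
  proof -
    have Gc: "G \<in> carrier_mat s s" by (simp add: G_def)
    show ?thesis by (subst det_upper_triangular[OF uG Gc]) (simp add: dG)
  qed
  have "det F = det M2" using detM2 by simp
  also have "\<dots> = (-1)^(s*r) * det (mat (s + r) (s + r) (\<lambda>(i,j). M2 $$ (if i < s then i + r else i - s, j)))"
    by (rule det_swap_rows[OF M2c'])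
  also have "det (mat (s + r) (s + r) (\<lambda>(i,j). M2 $$ (if i < s then i + r else i - s, j))) = det G * det (Hmat r (r+k) f g)"
    unfolding sw by (rule det_four_block_mat_lower_left_zero) (auto simp: G_def Y_def Hmat_def)
  finally show ?thesis using detG by (simp add: F_def mult.commute)
qed



lemma const_poly_prod: "(\<Prod>x\<in>A. [:f x:]) = [:\<Prod>x\<in>A. (f x :: 'a::comm_ring_1):]"
  by (induction A rule: infinite_finite_induct) (auto simp: mult.commute)

lemma core:
  fixes f g :: "'a::field poly" and bs :: "'a list"
  assumes dist: "distinct bs" and n: "length bs = r + k" and roots: "\<And>l. l < r + k \<Longrightarrow> poly g (bs!l) = 0"
    and dg: "degree g = r + k" and mg: "coeff g (r + k) = 1" and df: "degree f \<le> s + k"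
    and r1: "1 \<le> r" and s1: "1 \<le> s"
  shows "F_k k (s+k) (r+k) f g = (-1)^(r*s + (k + 1) + (r + k)) *
     (\<Sum>S\<in>{S. S \<subseteq> {0..<r+k} \<and> card S + 1 = r}.
        smult ((\<Prod>l\<in>S. poly f (bs!l)) / (\<Prod>l\<in>S. \<Prod>l'\<in>{0..<r+k}-S. (bs!l - bs!l')))
              (\<Prod>l\<in>S. monom 1 1 - [:bs!l:]))"
proof -
  define n where "n = r + k"
  define ps where "ps = map (\<lambda>b. [:b:]) bs"
  define V where "V = vprod ps"
  define x :: "'a poly" where "x = monom 1 1"
  define Ss where "Ss = {S. S \<subseteq> {0..<n} \<and> card S + 1 = r}"
  define \<rho> where "\<rho> = (\<lambda>S. (\<Prod>l\<in>S. \<Prod>l'\<in>{0..<n}-S. (bs!l - bs!l')))"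
  define P where "P = (\<lambda>S. (\<Prod>l\<in>S. x - [:bs!l:]))"
  have g0: "g \<noteq> 0" using mg by auto
  have lps: "length ps = n" by (simp add: ps_def n n_def)
  have psl: "ps ! l = [:bs!l:]" if "l < n" for l using that n by (simp add: ps_def n_def)
  have dps: "distinct ps" using dist by (simp add: ps_def distinct_map inj_on_def)
  have V0: "V \<noteq> 0" using vprod_nonzero[OF dps] by (simp add: V_def)
  have H: "F_k k (s+k) (r+k) f g = (-1)^(r*s) * det (Hmat r n f g)"
    unfolding F_k_def n_def by (rule stepB[OF r1 s1 dg mg df])
  have C: "(-1)^(k+1) * det (Hmat r n f g) * V =
    det (mat (n+1) (n+1) (\<lambda>(l,i). if l < n then (if i < r then [:poly f (bs!l):] * [:bs!l:]^(r-1-i) else [:bs!l:]^(n-i))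
            else (if i < r then monom 1 1^(r-1-i) else 0)))"
    unfolding V_def ps_def by (rule stepC) (use n roots dg g0 r1 in \<open>auto simp: n_def\<close>)
  also have "mat (n+1) (n+1) (\<lambda>(l,i). if l < n then (if i < r then [:poly f (bs!l):] * [:bs!l:]^(r-1-i) else [:bs!l:]^(n-i))
            else (if i < r then monom 1 1^(r-1-i) else 0)) =
     mat (n+1) (n+1) (\<lambda>(l,i). if l < n then (if i < r then [:poly f (bs!l):] * ps!l^(r-1-i) else ps!l^(n-i))
            else (if i < r then x^(r-1-i) else 0))"
    by (rule eq_matI) (auto simp: psl x_def)
  also have "det \<dots> = (\<Sum>S\<in>Ss. (\<Prod>l\<in>S. [:poly f (bs!l):]) * det (MSm n r S ps x))"
    unfolding Ss_def by (rule det_ET[OF lps]) (use r1 in \<open>auto simp: n_def\<close>)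
  also have "\<dots> = (\<Sum>S\<in>Ss. V * ((-1)^n * smult ((\<Prod>l\<in>S. poly f (bs!l)) / \<rho> S) (P S)))"
  proof (rule sum.cong[OF refl])
    fix S assume S: "S \<in> Ss"
    then have Ssub: "S \<subseteq> {0..<n}" and cS: "card S + 1 = r" by (auto simp: Ss_def)
    have finS: "finite S" using Ssub finite_subset by blast
    have xne: "x \<noteq> ps ! l" if "l < n" for l
    proof
      assume "x = ps ! l"
      then have "degree x = degree (ps ! l)" by simp
      then show False using that by (simp add: x_def psl degree_monom_eq)
    qed
    have ne: "bs!l \<noteq> bs!l'" if "l \<in> S" "l' \<in> {0..<n} - S" for l l'
      using that Ssub dist n by (auto simp: nth_eq_iff_index_eq n_def)
    have rho0: "\<rho> S \<noteq> 0"
      unfolding \<rho>_def using finS ne by (simp add: prod_zero_iff)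
    have m2: "det (MSm n r S ps x) * (\<Prod>l\<in>S. \<Prod>l'\<in>{0..<n}-S. (ps!l - ps!l')) = (-1)^n * vprod ps * (\<Prod>l\<in>S. x - ps!l)"
      by (rule det_MS2[OF lps Ssub cS]) (use cS xne in \<open>auto simp: n_def\<close>)
    have e1: "(\<Prod>l\<in>S. \<Prod>l'\<in>{0..<n}-S. (ps!l - ps!l')) = [:\<rho> S:]"
    proof -
      have "(\<Prod>l\<in>S. \<Prod>l'\<in>{0..<n}-S. (ps!l - ps!l')) = (\<Prod>l\<in>S. \<Prod>l'\<in>{0..<n}-S. [:bs!l - bs!l':])"
        by (intro prod.cong refl) (use Ssub in \<open>auto simp: psl\<close>)
      then show ?thesis unfolding \<rho>_def by (simp add: const_poly_prod)
    qed
    have e2: "(\<Prod>l\<in>S. x - ps!l) = P S" unfolding P_def using Ssub by (intro prod.cong) (auto simp: psl)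
    have D: "smult (\<rho> S) (det (MSm n r S ps x)) = (-1)^n * V * P S"
      using m2 e1 e2 by (simp add: V_def mult.commute)
    have "det (MSm n r S ps x) = smult (1 / \<rho> S) (smult (\<rho> S) (det (MSm n r S ps x)))"
      using rho0 by simp
    also have "\<dots> = smult (1 / \<rho> S) ((-1)^n * V * P S)" by (simp only: D)
    finally have D2: "det (MSm n r S ps x) = smult (1 / \<rho> S) ((-1)^n * V * P S)" .
    show "(\<Prod>l\<in>S. [:poly f (bs!l):]) * det (MSm n r S ps x) = V * ((-1)^n * smult ((\<Prod>l\<in>S. poly f (bs!l)) / \<rho> S) (P S))"
      unfolding D2 const_poly_prod by (simp add: mult_ac)
  qed
  also have "\<dots> = V * ((-1)^n * (\<Sum>S\<in>Ss. smult ((\<Prod>l\<in>S. poly f (bs!l)) / \<rho> S) (P S)))"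
    by (simp add: sum_distrib_left)
  finally have "V * ((-1)^(k+1) * det (Hmat r n f g)) = V * ((-1)^n * (\<Sum>S\<in>Ss. smult ((\<Prod>l\<in>S. poly f (bs!l)) / \<rho> S) (P S)))"
    by (simp add: mult_ac)
  then have E: "(-1)^(k+1) * det (Hmat r n f g) = (-1)^n * (\<Sum>S\<in>Ss. smult ((\<Prod>l\<in>S. poly f (bs!l)) / \<rho> S) (P S))"
    using V0 mult_left_cancel by blast
  have "det (Hmat r n f g) = (-1)^(k+1) * ((-1)^(k+1) * det (Hmat r n f g))"
    by (simp add: mult.assoc[symmetric] power_add[symmetric])
  also have "\<dots> = (-1)^(k+1) * (-1)^n * (\<Sum>S\<in>Ss. smult ((\<Prod>l\<in>S. poly f (bs!l)) / \<rho> S) (P S))"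
    unfolding E by (simp add: mult.assoc)
  finally show ?thesis unfolding H by (simp add: power_add n_def Ss_def \<rho>_def P_def x_def mult.assoc)
qed



lemma neg_one_pow_parity: "even a = even b \<Longrightarrow> (-1::'b::ring_1)^a = (-1)^b"
  by (cases "even a") auto

lemma neg_one_pow_poly: "(-1::'a::comm_ring_1 poly)^j * p = smult ((-1)^j) p"
  by (induction j) auto

lemma smult_sum_right: "smult c (sum f A) = (\<Sum>x\<in>A. smult c (f x))"
  by (induction A rule: infinite_finite_induct) (auto simp: smult_add_right)

lemma prod_linear_facts:
  fixes A :: "'a::field set"
  assumes "finite A"
  shows "degree (\<Prod>a\<in>A. [:- a, 1:]) = card A" "coeff (\<Prod>a\<in>A. [:- a, 1:]) (card A) = 1"
    "poly (\<Prod>a\<in>A. [:- a, 1:]) b = (\<Prod>a\<in>A. b - a)"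
proof -
  show d: "degree (\<Prod>a\<in>A. [:- a, 1:]) = card A"
    by (subst degree_prod_eq_sum_degree) auto
  show "coeff (\<Prod>a\<in>A. [:- a, 1:]) (card A) = 1"
    using lead_coeff_prod[of "\<lambda>a. [:- a, 1:]" A] d by simp
  show "poly (\<Prod>a\<in>A. [:- a, 1:]) b = (\<Prod>a\<in>A. b - a)"
    by (simp add: poly_prod)
qed

theorem proposition3p9:
  fixes A B :: "'a::field set" and d :: nat
  assumes "finite A" and "finite B"
    and "max (card A) (card B) \<le> d" and "d + 1 \<le> card A + card B"
  shows "Syl (card A) (d - card A) A B =
           (-1) ^ ((d - card A) * card B + card A + card B - 1) *
           F_k (card A + card B - d - 1) (card A) (card B)
               (\<Prod>a\<in>A. [:- a, 1:]) (\<Prod>b\<in>B. [:- b, 1:]) *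
           (\<Prod>a\<in>A. [:- a, 1:])"
proof -
  define m where "m = card A"
  define n where "n = card B"
  define k where "k = m + n - d - 1"
  define r where "r = n - k"
  define s where "s = m - k"
  define f where "f = (\<Prod>a\<in>A. [:- a, 1:])"
  define g where "g = (\<Prod>b\<in>B. [:- b, 1:])"
  have nrk: "n = r + k" and msk: "m = s + k" and r1: "1 \<le> r" and s1: "1 \<le> s" and dm: "d - m = r - 1"
    using assms by (auto simp: r_def s_def k_def m_def n_def)
  obtain bs where dist: "distinct bs" and sbs: "set bs = B" using finite_distinct_list[OF assms(2)] by blast
  have lbs: "length bs = n" using distinct_card[OF dist] sbs by (simp add: n_def)
  have dg: "degree g = r + k" and mg: "coeff g (r + k) = 1"
    using prod_linear_facts[OF assms(2)] by (simp_all add: g_def n_def[symmetric] nrk)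
  have df: "degree f \<le> s + k"
    using prod_linear_facts[OF assms(1)] by (simp add: f_def m_def[symmetric] msk)
  have roots: "poly g (bs!l) = 0" if "l < r + k" for l
  proof -
    have "bs ! l \<in> B" using that lbs nrk sbs by auto
    then show ?thesis using prod_linear_facts(3)[OF assms(2)] assms(2) by (simp add: g_def)
  qed
  define Ss where "Ss = {S. S \<subseteq> {0..<n} \<and> card S + 1 = r}"
  define \<rho> where "\<rho> = (\<lambda>S. (\<Prod>l\<in>S. \<Prod>l'\<in>{0..<n}-S. (bs!l - bs!l')))"
  define P where "P = (\<lambda>S. (\<Prod>l\<in>S. monom 1 1 - [:bs!l:]) :: 'a poly)"
  define \<Phi> where "\<Phi> = (\<lambda>S. (\<Prod>l\<in>S. poly f (bs!l)))"
  have core': "F_k k m n f g = (-1)^(r*s + (k + 1) + (r + k)) * (\<Sum>S\<in>Ss. smult (\<Phi> S / \<rho> S) (P S))"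
    using core[OF dist lbs[unfolded nrk] roots dg mg df r1 s1]
    by (simp add: msk nrk Ss_def \<rho>_def P_def \<Phi>_def)
  have injn: "inj_on ((!) bs) {0..<n}" using dist lbs by (simp add: inj_on_nth)
  have Bimg: "B = (!) bs ` {0..<n}" using sbs lbs by (auto simp: in_set_conv_nth)
  define Bs where "Bs = {B'. B' \<subseteq> B \<and> card B' = r - 1}"
  have A1: "{A'. A' \<subseteq> A \<and> card A' = m} = {A}"
    using assms(1) card_subset_eq by (auto simp: m_def)
  have "Syl m (d - m) A B = (\<Sum>B'\<in>Bs. smult (Res A B' / Res B' (B - B')) (f * Resx B'))"
  proof -
    have "Syl m (d - m) A B = (\<Sum>(A', B') \<in> {A} \<times> Bs.
        smult (Res A' B' * Res (A - A') (B - B') / (Res A' (A - A') * Res B' (B - B'))) (Resx A' * Resx B'))"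
      unfolding Syl_def A1 dm Bs_def ..
    also have "\<dots> = (\<Sum>B'\<in>Bs. smult (Res A B' * Res (A - A) (B - B') / (Res A (A - A) * Res B' (B - B'))) (Resx A * Resx B'))"
      by (simp add: sum.cartesian_product[symmetric])
    also have "\<dots> = (\<Sum>B'\<in>Bs. smult (Res A B' / Res B' (B - B')) (f * Resx B'))"
      by (simp add: Res_def Resx_def f_def)
    finally show ?thesis .
  qed
  also have "Bs = (\<lambda>S. (!) bs ` S) ` Ss"
  proof (rule equalityI; rule subsetI)
    fix B' assume "B' \<in> Bs"
    then have B': "B' \<subseteq> B" "card B' = r - 1" by (auto simp: Bs_def)
    define S where "S = {l. l < n \<and> bs ! l \<in> B'}"
    have SS: "S \<subseteq> {0..<n}" by (auto simp: S_def)
    have img: "(!) bs ` S = B'"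
    proof
      show "(!) bs ` S \<subseteq> B'" by (auto simp: S_def)
      show "B' \<subseteq> (!) bs ` S"
      proof
        fix b assume "b \<in> B'"
        then obtain l where "l < n" "bs ! l = b" using B' Bimg by auto
        then show "b \<in> (!) bs ` S" using \<open>b \<in> B'\<close> by (auto simp: S_def)
      qed
    qed
    have "card S = card B'" using img card_image[OF inj_on_subset[OF injn SS]] by simp
    then have "S \<in> Ss" using SS B' r1 by (auto simp: Ss_def)
    then show "B' \<in> (\<lambda>S. (!) bs ` S) ` Ss" using img by blast
  next
    fix B' assume "B' \<in> (\<lambda>S. (!) bs ` S) ` Ss"
    then obtain S where S: "S \<in> Ss" "B' = (!) bs ` S" by blast
    then have "S \<subseteq> {0..<n}" "card S + 1 = r" by (auto simp: Ss_def)
    then have "card B' = r - 1" using S card_image[OF inj_on_subset[OF injn]] by auto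
    moreover have "B' \<subseteq> B" using S \<open>S \<subseteq> {0..<n}\<close> Bimg by auto
    ultimately show "B' \<in> Bs" by (simp add: Bs_def)
  qed
  also have "(\<Sum>B'\<in>(\<lambda>S. (!) bs ` S) ` Ss. smult (Res A B' / Res B' (B - B')) (f * Resx B'))
     = (\<Sum>S\<in>Ss. smult (Res A ((!) bs ` S) / Res ((!) bs ` S) (B - (!) bs ` S)) (f * Resx ((!) bs ` S)))"
  proof (rule sum.reindex[unfolded o_def])
    show "inj_on (\<lambda>S. (!) bs ` S) Ss"
      by (rule inj_onI) (use injn in \<open>auto simp: Ss_def inj_on_image_eq_iff\<close>)
  qed
  also have "\<dots> = (\<Sum>S\<in>Ss. smult ((-1)^(m*(r-1)) * \<Phi> S / \<rho> S) (f * P S))"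
  proof (rule sum.cong[OF refl])
    fix S assume S: "S \<in> Ss"
    then have SS: "S \<subseteq> {0..<n}" and cS: "card S = r - 1" by (auto simp: Ss_def)
    have injS: "inj_on ((!) bs) S" by (rule inj_on_subset[OF injn SS])
    have finS: "finite S" using SS finite_subset by blast
    define Sc where "Sc = {0..<n} - S"
    have injSc: "inj_on ((!) bs) Sc" by (rule inj_on_subset[OF injn]) (auto simp: Sc_def)
    have Bd: "B - (!) bs ` S = (!) bs ` Sc"
      unfolding Bimg Sc_def using injn SS by (auto simp: inj_on_image_set_diff)
    have R1: "Res A ((!) bs ` S) = (-1)^(m*(r-1)) * \<Phi> S"
    proof -
      have "Res A ((!) bs ` S) = (\<Prod>a\<in>A. \<Prod>l\<in>S. a - bs ! l)"
        unfolding Res_def by (intro prod.cong refl) (simp add: prod.reindex[OF injS])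
      also have "\<dots> = (\<Prod>l\<in>S. \<Prod>a\<in>A. a - bs ! l)" by (rule prod.swap)
      also have "\<dots> = (\<Prod>l\<in>S. (-1)^m * poly f (bs ! l))"
      proof (intro prod.cong refl)
        fix l assume "l \<in> S"
        have "(\<Prod>a\<in>A. a - bs ! l) = (-1)^m * (\<Prod>a\<in>A. bs ! l - a)"
          using prod_uminus[of "\<lambda>a. bs ! l - a" A] by (simp add: m_def)
        then show "(\<Prod>a\<in>A. a - bs ! l) = (-1)^m * poly f (bs ! l)"
          using prod_linear_facts(3)[OF assms(1)] by (simp add: f_def)
      qed
      also have "\<dots> = (-1)^(m*(r-1)) * \<Phi> S"
        by (simp add: prod.distrib cS power_mult \<Phi>_def)
      finally show ?thesis .
    qed
    have R2: "Res ((!) bs ` S) (B - (!) bs ` S) = \<rho> S"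
      unfolding Bd Res_def \<rho>_def Sc_def[symmetric]
      by (simp add: prod.reindex[OF injS] prod.reindex[OF injSc])
    have R3: "Resx ((!) bs ` S) = P S"
      unfolding Resx_def P_def by (simp add: prod.reindex[OF injS] monom_Suc monom_0)
    show "smult (Res A ((!) bs ` S) / Res ((!) bs ` S) (B - (!) bs ` S)) (f * Resx ((!) bs ` S))
       = smult ((-1)^(m*(r-1)) * \<Phi> S / \<rho> S) (f * P S)"
      unfolding R1 R2 R3 ..
  qed
  finally have syl: "Syl m (d - m) A B = (\<Sum>S\<in>Ss. smult ((-1)^(m*(r-1)) * \<Phi> S / \<rho> S) (f * P S))" .
  have sign: "(-1::'a poly) ^ ((d - m) * n + m + n - 1) * (-1)^(r*s + (k + 1) + (r + k)) = (-1)^(m*(r-1))"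
  proof -
    obtain r0 where r0: "r = Suc r0" using r1 by (cases r) auto
    have "even ((d - m) * n + m + n - 1 + (r*s + (k + 1) + (r + k))) = even (m*(r-1))"
      unfolding dm unfolding msk nrk r0 by simp presburger
    then show ?thesis by (subst power_add[symmetric]) (rule neg_one_pow_parity)
  qed
  show ?thesis
    unfolding m_def[symmetric] n_def[symmetric] k_def[symmetric] f_def[symmetric] g_def[symmetric]
  proof -
    have "(-1) ^ ((d - m) * n + m + n - 1) * F_k k m n f g * f =
       ((-1::'a poly) ^ ((d - m) * n + m + n - 1) * (-1)^(r*s + (k + 1) + (r + k))) * ((\<Sum>S\<in>Ss. smult (\<Phi> S / \<rho> S) (P S)) * f)"
      unfolding core' by (simp only: mult.assoc)
    also have "\<dots> = (-1)^(m*(r-1)) * ((\<Sum>S\<in>Ss. smult (\<Phi> S / \<rho> S) (P S)) * f)"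
      by (simp only: sign)
    also have "\<dots> = smult ((-1)^(m*(r-1))) ((\<Sum>S\<in>Ss. smult (\<Phi> S / \<rho> S) (P S)) * f)"
      by (rule neg_one_pow_poly)
    also have "\<dots> = (\<Sum>S\<in>Ss. smult ((-1)^(m*(r-1))) (smult (\<Phi> S / \<rho> S) (P S) * f))"
      by (simp only: sum_distrib_right smult_sum_right)
    also have "\<dots> = (\<Sum>S\<in>Ss. smult ((-1)^(m*(r-1)) * \<Phi> S / \<rho> S) (f * P S))"
      by (intro sum.cong refl) (simp add: mult.commute)
    finally show "Syl m (d - m) A B = (-1) ^ ((d - m) * n + m + n - 1) * F_k k m n f g * f"
      using syl by simp
  qed
qed


end
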